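(* Let $m,g,H,\mathrm{C_dA},\rho,P_0>0$, $\mathrm{C_{rr}}\ge 0$ and $0\le\lambda<1$ be constants. For $D>0$, set $$L(D)=\sqrt{H^2+D^2},\qquad a(D)=m\,g\,(H+\mathrm{C_{rr}}D),\qquad b=\tfrac12\mathrm{C_dA}\,\rho,\qquad c=(1-\lambda)P_0,$$ and let $V(D)$ be the unique positive solution of $$a(D)\,\frac{V}{L(D)}+b\,V^3=c.$$ Define $T(D)=L(D)/V(D)$. Then $$\frac{\mathrm dT}{\mathrm dD}>0\quad\text{for all } D>0.$$ That is, among straight-line ascents with fixed height gain $H$, the ascent time strictly decreases as the horizontal distance $D$ decreases (the climb gets steeper). *)

theory Defs
  imports "HOL-Analysis.Analysis"
begin

end

theory Submission
  imports Defs
begin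

lemma phi_ex1:
  fixes b c y :: real
  assumes b: "b > 0" and c: "c > 0"
  shows "\<exists>!v. v > 0 \<and> c / v - b * v^2 = y"
proof -
  define p where "p = (\<lambda>v::real. b * v^3 + y * v)"
  define B where "B = 1 + (c + \<bar>y\<bar>) / b"
  have B1: "B \<ge> 1" using b c unfolding B_def by (simp add: field_simps)
  have "b * B \<ge> b + c + \<bar>y\<bar>" using b unfolding B_def by (simp add: field_simps)
  moreover have "b * B^2 \<ge> b * B" using B1 b
    by (simp add: power2_eq_square mult_left_mono)
  ultimately have "b * B^2 + y \<ge> b + c" by linarith
  hence "B * (b * B^2 + y) \<ge> 1 * (b + c)" using B1 b c
    by (intro mult_mono) auto
  hence pB: "p B \<ge> c" unfolding p_def using b by (simp add: algebra_simps power3_eq_cube power2_eq_square)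
  have p0: "p 0 \<le> c" using c unfolding p_def by simp
  have "continuous_on {0..B} p" unfolding p_def by (intro continuous_intros)
  then obtain v where v: "0 \<le> v" "v \<le> B" "p v = c" using IVT'[of p 0 c B] p0 pB B1 by auto
  have "v \<noteq> 0" using v c unfolding p_def by auto
  hence vpos: "v > 0" using v by auto
  have ev: "c / v - b * v^2 = y" using v(3) vpos unfolding p_def
    by (simp add: field_simps power3_eq_cube power2_eq_square)
  have mono: "c / v2 - b * v2^2 < c / v1 - b * v1^2" if "0 < v1" "v1 < v2" for v1 v2
  proof -
    have "c / v2 < c / v1" using that c by (simp add: frac_less2)
    moreover have "v1^2 < v2^2" using that by (simp add: power_strict_mono)
    hence "b * v1^2 < b * v2^2" using b by simp
    ultimately show ?thesis by linarith
  qed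
  show ?thesis
  proof (rule ex1I[of _ v])
    show "v > 0 \<and> c / v - b * v^2 = y" using vpos ev by simp
  next
    fix w assume w: "w > 0 \<and> c / w - b * w^2 = y"
    show "w = v"
    proof (rule ccontr)
      assume "w \<noteq> v"
      hence "w < v \<or> v < w" by linarith
      thus False using mono[of w v] mono[of v w] w vpos ev by auto
    qed
  qed
qed

lemma key_alg:
  fixes v L0 a0 b c ap Lp P kp :: real
  assumes vpos: "v > 0" and L0pos: "L0 > 0" and ceq: "c = a0 * (v / L0) + b * v^3"
  and P_def: "P = - c / v^2 - 2 * b * v" and kp_def: "kp = (ap * L0 - a0 * Lp) / L0^2"
  shows "Lp * v * (-P) + L0 * kp = 3 * b * v^2 * Lp + ap"
proof -
  have h1: "c / v = a0 / L0 + b * v^2" using vpos unfolding ceq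
    by (simp add: field_simps power3_eq_cube power2_eq_square)
  have h2: "Lp * v * (-P) = Lp * (c / v) + 2 * b * v^2 * Lp" using vpos unfolding P_def
    by (simp add: field_simps power2_eq_square)
  have h3: "L0 * kp = ap - a0 * Lp / L0" using L0pos unfolding kp_def
    by (simp add: field_simps power2_eq_square)
  show ?thesis unfolding h2 h3 h1 by (simp add: algebra_simps)
qed

theorem lemma2:
  fixes m g H CdA rho P0 Crr lambda :: real
    and L a V T :: "real \<Rightarrow> real" and b c :: real
  assumes "m > 0" "g > 0" "H > 0" "CdA > 0" "rho > 0" "P0 > 0"
    and "Crr \<ge> 0" and "0 \<le> lambda" "lambda < 1"
  defines "L \<equiv> (\<lambda>D. sqrt (H\<^sup>2 + D\<^sup>2))"
    and "a \<equiv> (\<lambda>D. m * g * (H + Crr * D))"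
    and "b \<equiv> 1/2 * CdA * rho"
    and "c \<equiv> (1 - lambda) * P0"
    and "V \<equiv> (\<lambda>D. THE v. v > 0 \<and> a D * (v / L D) + b * v ^ 3 = c)"
    and "T \<equiv> (\<lambda>D. L D / V D)"
  shows "\<forall>D > 0. \<exists>T'. (T has_real_derivative T') (at D) \<and> T' > 0"
proof (intro allI impI)
  fix D :: real assume D: "D > 0"
  have bpos: "b > 0" unfolding b_def using assms by simp
  have cpos: "c > 0" unfolding c_def using assms by simp
  define phi where "phi = (\<lambda>v::real. c / v - b * v^2)"
  define gi where "gi = (\<lambda>y. THE v. v > 0 \<and> phi v = y)"
  define k where "k = (\<lambda>x. a x / L x)"
  have gi: "gi y > 0 \<and> phi (gi y) = y" for y
    unfolding gi_def phi_def by (rule theI'[OF phi_ex1[OF bpos cpos]])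
  have gi_uniq: "v > 0 \<Longrightarrow> phi v = y \<Longrightarrow> gi y = v" for v y
    unfolding gi_def phi_def by (rule the1_equality[OF phi_ex1[OF bpos cpos]]) simp
  have Lpos: "L x > 0" for x unfolding L_def using assms by (simp add: add_pos_nonneg)
  have Veq: "V x = gi (k x)" for x
  proof -
    have "(v > 0 \<and> a x * (v / L x) + b * v ^ 3 = c) \<longleftrightarrow> (v > 0 \<and> phi v = k x)" for v
    proof -
      have "v > 0 \<Longrightarrow> (a x * (v / L x) + b * v ^ 3 = c) \<longleftrightarrow> (c / v - b * v^2 = a x / L x)"
        using Lpos[of x] by (auto simp: field_simps power3_eq_cube power2_eq_square)
      thus ?thesis unfolding phi_def k_def by auto
    qed
    thus ?thesis unfolding V_def gi_def by simp
  qed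
  hence Vfun: "V = gi \<circ> k" by (simp add: fun_eq_iff)
  define v where "v = V D"
  have vpos: "v > 0" and phiv: "phi v = k D" using gi[of "k D"] unfolding v_def Veq by auto
  define P where "P = - c / v^2 - 2 * b * v"
  have Pneg: "P < 0"
  proof -
    have "c / v^2 > 0" using vpos cpos by simp
    moreover have "b * v > 0" using vpos bpos by simp
    ultimately show ?thesis unfolding P_def by linarith
  qed
  have dphi: "(phi has_real_derivative P) (at z)" if "z = v" for z
    unfolding phi_def P_def that using vpos
    by (auto intro!: derivative_eq_intros simp: field_simps power2_eq_square)
  have contg: "isCont gi (k D)"
  proof -
    have v1: "v / 2 < v" using vpos by simp
    have v2: "v < 2 * v" using vpos by simp
    have i1: "gi (phi z) = z" if "v / 2 \<le> z" "z \<le> 2 * v" for z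
      using that vpos by (intro gi_uniq) auto
    have i2: "isCont phi z" if "v / 2 \<le> z" "z \<le> 2 * v" for z
      using that vpos unfolding phi_def by (intro continuous_intros) auto
    have "isCont gi (phi v)"
      by (rule isCont_inverse_function2[OF v1 v2 i1 i2])
    thus ?thesis using phiv by simp
  qed
  have d1: "(phi has_real_derivative P) (at (gi (k D)))" using dphi Veq v_def by simp
  have Pnz: "P \<noteq> 0" using Pneg by simp
  have x1: "k D - 1 < k D" and x2: "k D < k D + 1" by auto
  have inj: "phi (gi y) = y" if "k D - 1 < y" "y < k D + 1" for y using gi by auto
  have dg: "(gi has_real_derivative inverse P) (at (k D))"
    by (rule DERIV_inverse_function[OF d1 Pnz x1 x2 inj contg])
  define L0 where "L0 = L D"
  define Lp where "Lp = D / L0"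
  define a0 where "a0 = a D"
  define ap where "ap = m * g * Crr"
  have L0pos: "L0 > 0" unfolding L0_def by (rule Lpos)
  have a0pos: "a0 > 0" unfolding a0_def a_def using assms D by (simp add: add_pos_nonneg)
  have dL: "(L has_real_derivative Lp) (at D)"
  proof -
    have "H\<^sup>2 + D\<^sup>2 > 0" using assms by (simp add: add_pos_nonneg)
    hence "((\<lambda>x. sqrt (H\<^sup>2 + x\<^sup>2)) has_real_derivative inverse (sqrt (H\<^sup>2 + D\<^sup>2)) / 2 * (2 * D)) (at D)"
      by (auto intro!: derivative_eq_intros DERIV_real_sqrt simp: power2_eq_square)
    moreover have "inverse (sqrt (H\<^sup>2 + D\<^sup>2)) / 2 * (2 * D) = Lp"
      unfolding Lp_def L0_def L_def by (simp add: field_simps)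
    ultimately show ?thesis unfolding L_def by simp
  qed
  have da: "(a has_real_derivative ap) (at D)"
    unfolding a_def ap_def by (auto intro!: derivative_eq_intros)
  define kp where "kp = (ap * L0 - a0 * Lp) / L0^2"
  have dk: "(k has_real_derivative kp) (at D)"
  proof -
    have "(k has_real_derivative (ap * L D - a D * Lp) / (L D * L D)) (at D)"
      unfolding k_def by (rule DERIV_divide[OF da dL]) (use Lpos[of D] in simp)
    thus ?thesis unfolding kp_def L0_def a0_def by (simp add: power2_eq_square)
  qed
  define Vp where "Vp = inverse P * kp"
  have dV: "(V has_real_derivative Vp) (at D)"
    unfolding Vfun Vp_def using DERIV_chain[OF dg dk] by (simp add: mult.commute)
  define Tp where "Tp = (Lp * v - L0 * Vp) / (v * v)"
  have dT: "(T has_real_derivative Tp) (at D)"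
    unfolding T_def Tp_def L0_def v_def
    by (rule DERIV_divide[OF dL dV]) (use vpos v_def in auto)
  have ceq: "c = a0 * (v / L0) + b * v^3"
  proof -
    have "phi v = a0 / L0" using phiv unfolding k_def a0_def L0_def by simp
    thus ?thesis unfolding phi_def using vpos L0pos
      by (simp add: field_simps power3_eq_cube power2_eq_square)
  qed
  have key: "Lp * v * (-P) + L0 * kp = 3 * b * v^2 * Lp + ap"
    by (rule key_alg[OF vpos L0pos ceq P_def kp_def])
  have Lppos: "Lp > 0" unfolding Lp_def using D L0pos by simp
  have appos: "ap \<ge> 0" unfolding ap_def using assms by simp
  have "3 * b * v^2 * Lp + ap > 0" using bpos vpos Lppos appos by (simp add: add_pos_nonneg)
  hence "Lp * v * (-P) + L0 * kp > 0" using key by simp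
  moreover have "-P > 0" using Pneg by simp
  ultimately have "(Lp * v * (-P) + L0 * kp) / (-P) > 0" by (rule divide_pos_pos)
  moreover have "(Lp * v * (-P) + L0 * kp) / (-P) = Lp * v - L0 * Vp"
    unfolding Vp_def using Pneg by (simp add: field_simps)
  ultimately have "Lp * v - L0 * Vp > 0" by simp
  hence "Tp > 0" unfolding Tp_def using vpos by simp
  thus "\<exists>T'. (T has_real_derivative T') (at D) \<and> T' > 0" using dT by blast
qed

end
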